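(* Let $m\ge 1$ be an integer, $N=2m$, and let $x\in[-\pi/2,\pi/2]$. For $j=1,\ldots,2m$ define $\varphi_j=\left(\frac{N-(2j-1)}{N}\right)x$, so that $\varphi_j=-\varphi_{2m+1-j}$. For a function $g:\{1,\ldots,2m\}\to\{+1,-1\}$ satisfying the balanced condition $\sum_{j=1}^{2m} g(j)=0$, put $$\mathbf{S}(g)=\sum_{j=1}^{2m} g(j)\,e^{\imath\varphi_j}.$$ Then, over all such balanced $g$, the maximum of $|\mathbf{S}(g)|$ is attained at the two antisymmetric balanced functions $$g(j)=\begin{cases}1 & 1\le j\le m\\ -1 & m+1\le j\le 2m\end{cases}\qquad\text{and}\qquad g(j)=\begin{cases}-1 & 1\le j\le m\\ 1 & m+1\le j\le 2m.\end{cases}$$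
   Context: Here $\imath$ denotes the imaginary unit. Here $N$ is any even positive integer (not necessarily a power of 2). These two maximizing functions are called the antisymmetric balanced (ASB) functions; they correspond to the bit strings $0\cdots0\,1\cdots1$ and $1\cdots1\,0\cdots0$ (each block of length $m$). *)

theory Defs
  imports "HOL-Analysis.Analysis"
begin

definition phase :: "nat \<Rightarrow> real \<Rightarrow> nat \<Rightarrow> real" where
  "phase m x j = ((real (2*m) - (2 * real j - 1)) / real (2*m)) * x"

definition balanced :: "nat \<Rightarrow> (nat \<Rightarrow> int) \<Rightarrow> bool" where
  "balanced m g \<longleftrightarrow> (\<forall>j\<in>{1..2*m}. g j = 1 \<or> g j = -1) \<and> (\<Sum>j=1..2*m. g j) = 0"

definition S :: "nat \<Rightarrow> real \<Rightarrow> (nat \<Rightarrow> int) \<Rightarrow> complex" where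
  "S m x g = (\<Sum>j=1..2*m. of_int (g j) * exp (\<i> * complex_of_real (phase m x j)))"

definition asb1 :: "nat \<Rightarrow> nat \<Rightarrow> int" where
  "asb1 m j = (if j \<le> m then 1 else -1)"

definition asb2 :: "nat \<Rightarrow> nat \<Rightarrow> int" where
  "asb2 m j = (if j \<le> m then -1 else 1)"

end

theory Submission
  imports Defs
begin

lemma split_sum:
  fixes f :: "nat \<Rightarrow> 'a::comm_monoid_add"
  shows "(\<Sum>j=1..2*m. f j) = (\<Sum>j=1..m. f j + f (2*m+1-j))"
proof -
  have "{1..2*m} = {1..m} \<union> {m+1..2*m}" by auto
  then have "(\<Sum>j=1..2*m. f j) = (\<Sum>j=1..m. f j) + (\<Sum>j=m+1..2*m. f j)"
    by (simp add: sum.union_disjoint)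
  moreover have "(\<Sum>j=m+1..2*m. f j) = (\<Sum>j=1..m. f (2*m+1-j))"
    by (rule sum.reindex_bij_witness[of _ "\<lambda>j. 2*m+1-j" "\<lambda>j. 2*m+1-j"]) auto
  ultimately show ?thesis by (simp add: sum.distrib)
qed

lemma phase_refl:
  assumes "j \<le> 2*m+1"
  shows "phase m x (2*m+1-j) = - phase m x j"
proof -
  have r: "real (2*m+1-j) = 2*real m + 1 - real j" using assms by (simp add: of_nat_diff)
  have "real (2*m) - (2 * real (2*m+1-j) - 1) = - (real (2*m) - (2 * real j - 1))"
    unfolding r by simp
  then show ?thesis unfolding phase_def by (simp only: minus_divide_left)
qed

lemma phase_bound:
  assumes "1 \<le> j" "j \<le> m" "\<bar>x\<bar> \<le> pi/2"
  shows "\<bar>phase m x j\<bar> \<le> pi/2" and "0 \<le> x \<Longrightarrow> 0 \<le> phase m x j"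
    and "x \<le> 0 \<Longrightarrow> phase m x j \<le> 0"
proof -
  define c where "c = (real (2*m) - (2 * real j - 1)) / real (2*m)"
  have m: "real m \<ge> 1" using assms by simp
  have jj: "1 \<le> real j" "real j \<le> real m" using assms by auto
  have c0: "0 \<le> c" unfolding c_def using m jj by (simp add: divide_simps)
  have c1: "c \<le> 1" unfolding c_def using m jj by (simp add: divide_simps)
  have p: "phase m x j = c * x" unfolding phase_def c_def by simp
  have "\<bar>c * x\<bar> \<le> \<bar>x\<bar>" using c0 c1 by (simp add: abs_mult mult_left_le_one_le)
  then show "\<bar>phase m x j\<bar> \<le> pi/2" using p assms(3) by simp
  show "0 \<le> x \<Longrightarrow> 0 \<le> phase m x j" using p c0 by simp
  show "x \<le> 0 \<Longrightarrow> phase m x j \<le> 0" using p c0 by (simp add: mult_nonneg_nonpos)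
qed

lemma one_minus_cos:
  assumes "\<bar>t\<bar> \<le> pi/2"
  shows "1 - cos t \<le> \<bar>sin t\<bar>"
proof -
  have c: "0 \<le> cos t" using assms by (intro cos_ge_zero) auto
  have "cos t * cos t \<le> cos t" using c cos_le_one[of t] by (simp add: mult_left_le_one_le)
  then have "1 - cos t \<le> (1 - cos t) * (1 + cos t)" by (simp add: algebra_simps)
  also have "\<dots> = (sin t)^2" by (simp add: sin_squared_eq power2_eq_square algebra_simps)
  also have "\<dots> \<le> \<bar>sin t\<bar>"
  proof -
    have "\<bar>sin t\<bar> \<le> 1" by simp
    then have "\<bar>sin t\<bar> * \<bar>sin t\<bar> \<le> \<bar>sin t\<bar>" by (intro mult_left_le_one_le) simp_all
    moreover have "(sin t)^2 = \<bar>sin t\<bar> * \<bar>sin t\<bar>" by (simp add: power2_eq_square abs_mult[symmetric])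
    ultimately show ?thesis by simp
  qed
  finally show ?thesis .
qed

lemma S_eq:
  "S m x g = Complex (\<Sum>j=1..2*m. of_int (g j) * cos (phase m x j))
                     (\<Sum>j=1..2*m. of_int (g j) * sin (phase m x j))"
  unfolding S_def by (simp add: complex_eq_iff Re_sum Im_sum Re_exp Im_exp)

lemma A_eq:
  "(\<Sum>j=1..2*m. of_int (g j) * cos (phase m x j)) =
   (\<Sum>j=1..m. of_int (g j + g (2*m+1-j)) * cos (phase m x j))"
proof (subst split_sum, rule sum.cong)
  fix j assume "j \<in> {1..m}"
  then have "phase m x (2*m+1-j) = - phase m x j" by (intro phase_refl) auto
  then show "of_int (g j) * cos (phase m x j) + of_int (g (2*m+1-j)) * cos (phase m x (2*m+1-j)) =
     of_int (g j + g (2*m+1-j)) * cos (phase m x j)" by (simp add: algebra_simps)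
qed simp

lemma B_eq:
  "(\<Sum>j=1..2*m. of_int (g j) * sin (phase m x j)) =
   (\<Sum>j=1..m. of_int (g j - g (2*m+1-j)) * sin (phase m x j))"
proof (subst split_sum, rule sum.cong)
  fix j assume "j \<in> {1..m}"
  then have "phase m x (2*m+1-j) = - phase m x j" by (intro phase_refl) auto
  then show "of_int (g j) * sin (phase m x j) + of_int (g (2*m+1-j)) * sin (phase m x (2*m+1-j)) =
     of_int (g j - g (2*m+1-j)) * sin (phase m x j)" by (simp add: algebra_simps)
qed simp

lemma bound:
  assumes bal: "balanced m g" and xb: "\<bar>x\<bar> \<le> pi/2"
  shows "cmod (S m x g) \<le> 2 * (\<Sum>j=1..m. \<bar>sin (phase m x j)\<bar>)"
proof -
  define u where "u j = real_of_int (g j + g (2*m+1-j))" for j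
  define v where "v j = real_of_int (g j - g (2*m+1-j))" for j
  define A where "A = (\<Sum>j=1..m. u j * cos (phase m x j))"
  define B where "B = (\<Sum>j=1..m. v j * sin (phase m x j))"
  have SAB: "S m x g = Complex A B" unfolding S_eq A_eq B_eq A_def B_def u_def v_def by simp
  have "(\<Sum>j=1..2*m. g j) = 0" using bal unfolding balanced_def by simp
  then have "(\<Sum>j=1..m. g j + g (2*m+1-j)) = 0" using split_sum[of g m] by simp
  then have su: "(\<Sum>j=1..m. u j) = 0" unfolding u_def
    by (metis of_int_0 of_int_sum)
  have "A = (\<Sum>j=1..m. u j * (cos (phase m x j) - 1))"
    using su by (simp add: A_def algebra_simps sum_subtractf)
  then have "\<bar>A\<bar> \<le> (\<Sum>j=1..m. \<bar>u j * (cos (phase m x j) - 1)\<bar>)" by simp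
  also have "\<dots> \<le> (\<Sum>j=1..m. \<bar>u j\<bar> * \<bar>sin (phase m x j)\<bar>)"
  proof (rule sum_mono)
    fix j assume "j \<in> {1..m}"
    then have "\<bar>phase m x j\<bar> \<le> pi/2" using phase_bound xb by auto
    then have "\<bar>cos (phase m x j) - 1\<bar> \<le> \<bar>sin (phase m x j)\<bar>"
      using one_minus_cos by (simp add: abs_minus_commute)
    then show "\<bar>u j * (cos (phase m x j) - 1)\<bar> \<le> \<bar>u j\<bar> * \<bar>sin (phase m x j)\<bar>"
      by (simp add: abs_mult mult_left_mono)
  qed
  finally have Ab: "\<bar>A\<bar> \<le> (\<Sum>j=1..m. \<bar>u j\<bar> * \<bar>sin (phase m x j)\<bar>)" .
  have "\<bar>B\<bar> \<le> (\<Sum>j=1..m. \<bar>v j * sin (phase m x j)\<bar>)" unfolding B_def by (rule sum_abs)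
  then have Bb: "\<bar>B\<bar> \<le> (\<Sum>j=1..m. \<bar>v j\<bar> * \<bar>sin (phase m x j)\<bar>)" by (simp add: abs_mult)
  have uv: "\<bar>u j\<bar> + \<bar>v j\<bar> = 2" if "j \<in> {1..m}" for j
  proof -
    have a: "\<forall>j\<in>{1..2*m}. g j = 1 \<or> g j = -1" using bal unfolding balanced_def by simp
    have "2*m+1-j \<in> {1..2*m}" "j \<in> {1..2*m}" using that by auto
    then have "g j = 1 \<or> g j = -1" "g (2*m+1-j) = 1 \<or> g (2*m+1-j) = -1"
      using a by blast+
    then show ?thesis unfolding u_def v_def by auto
  qed
  have "cmod (S m x g) \<le> \<bar>A\<bar> + \<bar>B\<bar>" using cmod_le[of "Complex A B"] SAB by simp
  also have "\<dots> \<le> (\<Sum>j=1..m. (\<bar>u j\<bar> + \<bar>v j\<bar>) * \<bar>sin (phase m x j)\<bar>)"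
    using Ab Bb by (simp add: sum.distrib distrib_right)
  also have "\<dots> = (\<Sum>j=1..m. 2 * \<bar>sin (phase m x j)\<bar>)"
    by (rule sum.cong) (auto simp: uv)
  finally show ?thesis by (simp add: sum_distrib_left)
qed

lemma asb1_val:
  assumes xb: "\<bar>x\<bar> \<le> pi/2"
  shows "cmod (S m x (asb1 m)) = 2 * (\<Sum>j=1..m. \<bar>sin (phase m x j)\<bar>)"
proof -
  have A0: "(\<Sum>j=1..2*m. of_int (asb1 m j) * cos (phase m x j)) = 0"
    unfolding A_eq by (rule sum.neutral) (auto simp: asb1_def)
  have B2: "(\<Sum>j=1..2*m. of_int (asb1 m j) * sin (phase m x j)) = 2 * (\<Sum>j=1..m. sin (phase m x j))"
    unfolding B_eq sum_distrib_left by (rule sum.cong) (auto simp: asb1_def)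
  have "cmod (S m x (asb1 m)) = \<bar>2 * (\<Sum>j=1..m. sin (phase m x j))\<bar>"
  proof -
    have "cmod (Complex 0 b) = \<bar>b\<bar>" for b by (simp add: cmod_def)
    then show ?thesis unfolding S_eq A0 B2 by simp
  qed
  also have "\<dots> = 2 * (\<Sum>j=1..m. \<bar>sin (phase m x j)\<bar>)"
  proof (cases "0 \<le> x")
    case True
    have "sin (phase m x j) \<ge> 0" if "j \<in> {1..m}" for j
    proof -
      have "0 \<le> phase m x j" "\<bar>phase m x j\<bar> \<le> pi/2" using phase_bound[of j m x] that xb True by auto
      then show ?thesis by (intro sin_ge_zero) auto
    qed
    then have "(\<Sum>j=1..m. sin (phase m x j)) \<ge> 0" by (intro sum_nonneg) simp
    then show ?thesis using \<open>\<And>j. j \<in> {1..m} \<Longrightarrow> sin (phase m x j) \<ge> 0\<close> by simp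
  next
    case False
    have n: "sin (phase m x j) \<le> 0" if "j \<in> {1..m}" for j
    proof -
      have "phase m x j \<le> 0" "\<bar>phase m x j\<bar> \<le> pi/2" using phase_bound[of j m x] that xb False by auto
      then have "sin (- phase m x j) \<ge> 0" by (intro sin_ge_zero) auto
      then show ?thesis by simp
    qed
    then have "(\<Sum>j=1..m. sin (phase m x j)) \<le> 0" by (intro sum_nonpos) simp
    moreover have "(\<Sum>j=1..m. \<bar>sin (phase m x j)\<bar>) = - (\<Sum>j=1..m. sin (phase m x j))"
      using n by (simp add: sum_negf[symmetric])
    ultimately show ?thesis by simp
  qed
  finally show ?thesis .
qed

lemma asb2_S: "S m x (asb2 m) = - S m x (asb1 m)"
  unfolding S_def asb1_def asb2_def sum_negf[symmetric] by (rule sum.cong) auto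

lemma bal1: "balanced m (asb1 m)"
proof -
  have "(\<Sum>j=1..m. asb1 m j + asb1 m (2*m+1-j)) = 0"
    by (rule sum.neutral) (auto simp: asb1_def)
  then show ?thesis unfolding balanced_def using split_sum[of "asb1 m" m]
    by (auto simp: asb1_def)
qed

lemma bal2: "balanced m (asb2 m)"
proof -
  have "(\<Sum>j=1..m. asb2 m j + asb2 m (2*m+1-j)) = 0"
    by (rule sum.neutral) (auto simp: asb2_def)
  then show ?thesis unfolding balanced_def using split_sum[of "asb2 m" m]
    by (auto simp: asb2_def)
qed

theorem theorem1:
  fixes m :: nat and x :: real
  assumes "m \<ge> 1" and "-(pi/2) \<le> x" and "x \<le> pi/2"
  shows "balanced m (asb1 m) \<and> balanced m (asb2 m) \<and>
         (\<forall>g. balanced m g \<longrightarrow> cmod (S m x g) \<le> cmod (S m x (asb1 m))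
                              \<and> cmod (S m x g) \<le> cmod (S m x (asb2 m)))"
proof -
  have xb: "\<bar>x\<bar> \<le> pi/2" using assms by auto
  show ?thesis using bal1 bal2 bound[OF _ xb] asb1_val[OF xb] asb2_S by simp
qed

end
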